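(* If $G$ is a $3$-edge-connected cubic graph admitting a hamiltonian cycle, then $fn(G)=2$.
   Context: An orientation is strong if for every ordered pair of distinct vertices $u,v$ there is a directed $uv$-path. An edge $e$ is deletable in an orientation $(G,o)$ if the restriction of $o$ to $E(G)\setminus\{e\}$ is a strong orientation of $G-e$. For a $3$-edge-connected graph $G$, the Frank number $fn(G)$ is the minimum number $k$ such that $G$ admits $k$ orientations with the property that every edge of $G$ is deletable in at least one of them. *)

theory Defs
  imports Main
begin

definition simple_graph :: "'a set \<Rightarrow> 'a set set \<Rightarrow> bool" where
  "simple_graph V E \<longleftrightarrow> finite V \<and>
     (\<forall>e\<in>E. \<exists>u v. e = {u, v} \<and> u \<noteq> v \<and> u \<in> V \<and> v \<in> V)"

definition adj_rel :: "'a set set \<Rightarrow> ('a \<times> 'a) set" where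
  "adj_rel E = {(u, v). {u, v} \<in> E}"

definition connected_graph :: "'a set \<Rightarrow> 'a set set \<Rightarrow> bool" where
  "connected_graph V E \<longleftrightarrow> (\<forall>u\<in>V. \<forall>v\<in>V. (u, v) \<in> (adj_rel E)\<^sup>*)"

definition k_edge_connected :: "nat \<Rightarrow> 'a set \<Rightarrow> 'a set set \<Rightarrow> bool" where
  "k_edge_connected k V E \<longleftrightarrow>
     (\<forall>F. F \<subseteq> E \<and> card F < k \<longrightarrow> connected_graph V (E - F))"

definition cubic :: "'a set \<Rightarrow> 'a set set \<Rightarrow> bool" where
  "cubic V E \<longleftrightarrow> (\<forall>v\<in>V. card {e\<in>E. v \<in> e} = 3)"

definition hamiltonian_cycle :: "'a set \<Rightarrow> 'a set set \<Rightarrow> 'a list \<Rightarrow> bool" where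
  "hamiltonian_cycle V E vs \<longleftrightarrow> distinct vs \<and> set vs = V \<and> length vs \<ge> 3 \<and>
     (\<forall>i < length vs. {vs ! i, vs ! ((i + 1) mod length vs)} \<in> E)"

definition is_orientation :: "'a set set \<Rightarrow> ('a set \<Rightarrow> 'a \<times> 'a) \<Rightarrow> bool" where
  "is_orientation E ori \<longleftrightarrow> (\<forall>e\<in>E. e = {fst (ori e), snd (ori e)})"

definition arcs :: "('a set \<Rightarrow> 'a \<times> 'a) \<Rightarrow> 'a set set \<Rightarrow> ('a \<times> 'a) set" where
  "arcs ori F = ori ` F"

definition strong_orientation :: "'a set \<Rightarrow> 'a set set \<Rightarrow> ('a set \<Rightarrow> 'a \<times> 'a) \<Rightarrow> bool" where
  "strong_orientation V E ori \<longleftrightarrow> is_orientation E ori \<and>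
     (\<forall>u\<in>V. \<forall>v\<in>V. u \<noteq> v \<longrightarrow> (u, v) \<in> (arcs ori E)\<^sup>+)"

definition deletable :: "'a set \<Rightarrow> 'a set set \<Rightarrow> ('a set \<Rightarrow> 'a \<times> 'a) \<Rightarrow> 'a set \<Rightarrow> bool" where
  "deletable V E ori e \<longleftrightarrow> strong_orientation V (E - {e}) ori"

definition frank_number :: "'a set \<Rightarrow> 'a set set \<Rightarrow> nat" where
  "frank_number V E = (LEAST k. \<exists>os. length os = k \<and>
      (\<forall>ori\<in>set os. is_orientation E ori) \<and>
      (\<forall>e\<in>E. \<exists>ori\<in>set os. deletable V E ori e))"

end

theory Submission
  imports Defs
begin
lemma sg_edge: "simple_graph V E \<Longrightarrow> e \<in> E \<Longrightarrow> e \<subseteq> V"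
  unfolding simple_graph_def by auto

lemma sg_finite: "simple_graph V E \<Longrightarrow> finite E"
proof -
  assume a: "simple_graph V E"
  hence "E \<subseteq> Pow V" using sg_edge by auto
  moreover have "finite V" using a by (simp add: simple_graph_def)
  ultimately show ?thesis by (simp add: finite_subset)
qed

lemma ori_eq: "is_orientation E ori \<Longrightarrow> e \<in> E \<Longrightarrow> e = {fst (ori e), snd (ori e)}"
  by (simp add: is_orientation_def)

lemma cut3:
  assumes sg: "simple_graph V E" and k: "k_edge_connected 3 V E"
    and S: "S \<subseteq> V" and u: "u \<in> S" and v: "v \<in> V" "v \<notin> S"
  shows "3 \<le> card {e\<in>E. e \<inter> S \<noteq> {} \<and> \<not> e \<subseteq> S}"
proof (rule ccontr)
  let ?F = "{e\<in>E. e \<inter> S \<noteq> {} \<and> \<not> e \<subseteq> S}"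
  assume "\<not> 3 \<le> card ?F"
  hence "connected_graph V (E - ?F)" using k unfolding k_edge_connected_def by auto
  hence "(u, v) \<in> (adj_rel (E - ?F))\<^sup>*" using u v S unfolding connected_graph_def by blast
  moreover have "(u, x) \<in> (adj_rel (E - ?F))\<^sup>* \<Longrightarrow> x \<in> S" for x
  proof (induction rule: rtrancl_induct)
    case base then show ?case using u .
  next
    case (step y z)
    then have "{y, z} \<in> E - ?F" unfolding adj_rel_def by auto
    then show ?case using step.IH by auto
  qed
  ultimately show False using v by blast
qed

lemma flow_deletable:
  assumes sg: "simple_graph V E" and k: "k_edge_connected 3 V E"
    and ori: "is_orientation E ori"
    and wpos: "\<forall>e\<in>E. (1::nat) \<le> w e"
    and cons: "\<forall>v\<in>V. (\<Sum>e\<in>{e\<in>E. snd (ori e) = v}. w e) = (\<Sum>e\<in>{e\<in>E. fst (ori e) = v}. w e)"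
    and e0: "e0 \<in> E" and w0: "w e0 = 1"
  shows "deletable V E ori e0"
  unfolding deletable_def strong_orientation_def
proof (intro conjI ballI impI)
  show "is_orientation (E - {e0}) ori" using ori unfolding is_orientation_def by (meson DiffD1)
next
  fix u v assume u: "u \<in> V" and v: "v \<in> V" and uv: "u \<noteq> v"
  let ?A = "arcs ori (E - {e0})"
  show "(u, v) \<in> ?A\<^sup>+"
  proof (rule ccontr)
    assume nuv: "(u, v) \<notin> ?A\<^sup>+"
    define S where "S = {x\<in>V. x = u \<or> (u, x) \<in> ?A\<^sup>+}"
    have fE: "finite E" using sg_finite[OF sg] .
    have fV: "finite V" using sg by (simp add: simple_graph_def)
    have SV: "S \<subseteq> V" unfolding S_def by auto
    have uS: "u \<in> S" unfolding S_def using u by auto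
    have vS: "v \<notin> S" unfolding S_def using nuv uv by auto
    have endsV: "fst (ori e) \<in> V \<and> snd (ori e) \<in> V" if "e \<in> E" for e
      using ori_eq[OF ori that] sg_edge[OF sg that] by (metis insert_subset)
    have clos: "snd (ori e) \<in> S" if "e \<in> E" "e \<noteq> e0" "fst (ori e) \<in> S" for e
    proof -
      have "e \<in> E - {e0}" using that by simp
      then have arc: "(fst (ori e), snd (ori e)) \<in> ?A" unfolding arcs_def by (intro image_eqI[of _ ori e]) auto
      have "(u, snd (ori e)) \<in> ?A\<^sup>+"
        using that(3) arc unfolding S_def by (auto intro: trancl_into_trancl)
      thus ?thesis unfolding S_def using endsV[OF that(1)] by auto
    qed
    define In where "In = {e\<in>E. snd (ori e) \<in> S \<and> fst (ori e) \<notin> S}"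
    define Out where "Out = {e\<in>E. fst (ori e) \<in> S \<and> snd (ori e) \<notin> S}"
    define Both where "Both = {e\<in>E. fst (ori e) \<in> S \<and> snd (ori e) \<in> S}"
    have Out_sub: "Out \<subseteq> {e0}" unfolding Out_def using clos by blast
    let ?F = "{e\<in>E. e \<inter> S \<noteq> {} \<and> \<not> e \<subseteq> S}"
    have F3: "3 \<le> card ?F" using cut3[OF sg k SV uS v vS] .
    have FIO: "?F \<subseteq> In \<union> Out"
    proof
      fix e assume "e \<in> ?F"
      obtain a b where ab: "ori e = (a, b)" by (cases "ori e")
      have eE: "e \<in> E" "e \<inter> S \<noteq> {}" "\<not> e \<subseteq> S" using \<open>e \<in> ?F\<close> by auto
      have "e = {fst (ori e), snd (ori e)}" using ori_eq[OF ori eE(1)] .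
      hence eab: "e = {a, b}" using ab by simp
      have "(b \<in> S \<and> a \<notin> S) \<or> (a \<in> S \<and> b \<notin> S)" using eE(2,3) unfolding eab by blast
      then show "e \<in> In \<union> Out" unfolding In_def Out_def using eE(1) ab by auto
    qed
    have fIn: "finite In" "finite Out" "finite Both" using fE unfolding In_def Out_def Both_def by auto
    have "card ?F \<le> card (In \<union> Out)" using FIO fIn by (simp add: card_mono)
    also have "\<dots> \<le> card In + card Out" by (rule card_Un_le)
    also have "card Out \<le> 1" using card_mono[OF _ Out_sub] by simp
    finally have cIn: "2 \<le> card In" using F3 by linarith
    have "card In = (\<Sum>e\<in>In. 1::nat)" by simp
    also have "\<dots> \<le> (\<Sum>e\<in>In. w e)" using wpos unfolding In_def by (intro sum_mono) auto
    finally have sIn: "2 \<le> (\<Sum>e\<in>In. w e)" using cIn by linarith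
    have sOut: "(\<Sum>e\<in>Out. w e) \<le> 1"
    proof (cases "Out = {}")
      case True then show ?thesis by simp
    next
      case False then have "Out = {e0}" using Out_sub by blast
      then show ?thesis using w0 by simp
    qed
    have fS: "finite S" using fV SV finite_subset by blast
    have fsS: "finite {e\<in>E. snd (ori e) \<in> S}" "finite {e\<in>E. fst (ori e) \<in> S}" using fE by auto
    have g1: "(\<Sum>v\<in>S. sum w {x. x \<in> {e\<in>E. snd (ori e) \<in> S} \<and> snd (ori x) = v}) = (\<Sum>e\<in>{e\<in>E. snd (ori e) \<in> S}. w e)"
      by (rule sum.group[OF fsS(1) fS]) blast
    have g2: "(\<Sum>v\<in>S. sum w {x. x \<in> {e\<in>E. fst (ori e) \<in> S} \<and> fst (ori x) = v}) = (\<Sum>e\<in>{e\<in>E. fst (ori e) \<in> S}. w e)"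
      by (rule sum.group[OF fsS(2) fS]) blast
    have s1: "v \<in> S \<Longrightarrow> {x. x \<in> {e\<in>E. snd (ori e) \<in> S} \<and> snd (ori x) = v} = {e\<in>E. snd (ori e) = v}" for v
      by blast
    have s2: "v \<in> S \<Longrightarrow> {x. x \<in> {e\<in>E. fst (ori e) \<in> S} \<and> fst (ori x) = v} = {e\<in>E. fst (ori e) = v}" for v
      by blast
    have "(\<Sum>e\<in>{e\<in>E. snd (ori e) \<in> S}. w e) = (\<Sum>v\<in>S. sum w {e\<in>E. snd (ori e) = v})"
      unfolding g1[symmetric] using s1 by (intro sum.cong) simp_all
    also have "\<dots> = (\<Sum>v\<in>S. sum w {e\<in>E. fst (ori e) = v})"
    proof (rule sum.cong[OF refl])
      fix v assume "v \<in> S"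
      then have "v \<in> V" using SV by blast
      then show "sum w {e\<in>E. snd (ori e) = v} = sum w {e\<in>E. fst (ori e) = v}" by (rule cons[rule_format])
    qed
    also have "\<dots> = (\<Sum>e\<in>{e\<in>E. fst (ori e) \<in> S}. w e)"
      unfolding g2[symmetric] using s2 by (intro sum.cong) simp_all
    finally have eq: "(\<Sum>e\<in>{e\<in>E. snd (ori e) \<in> S}. w e) = (\<Sum>e\<in>{e\<in>E. fst (ori e) \<in> S}. w e)" .
    have d1: "{e\<in>E. snd (ori e) \<in> S} = In \<union> Both" "In \<inter> Both = {}"
      unfolding In_def Both_def by auto
    have d2: "{e\<in>E. fst (ori e) \<in> S} = Out \<union> Both" "Out \<inter> Both = {}"
      unfolding Out_def Both_def by auto
    have "(\<Sum>e\<in>In. w e) + (\<Sum>e\<in>Both. w e) = (\<Sum>e\<in>Out. w e) + (\<Sum>e\<in>Both. w e)"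
      using eq unfolding d1(1) d2(1) sum.union_disjoint[OF fIn(1) fIn(3) d1(2)]
        sum.union_disjoint[OF fIn(2) fIn(3) d2(2)] .
    then show False using sIn sOut by linarith
  qed
qed

lemma strong_in_out:
  assumes "strong_orientation V E' ori" "x \<in> V" "y \<in> V" "x \<noteq> y"
  shows "\<exists>f\<in>E'. snd (ori f) = x" "\<exists>f\<in>E'. fst (ori f) = x"
proof -
  have "\<forall>u\<in>V. \<forall>v\<in>V. u \<noteq> v \<longrightarrow> (u, v) \<in> (arcs ori E')\<^sup>+" using assms(1) unfolding strong_orientation_def by simp
  then have yx: "(y, x) \<in> (arcs ori E')\<^sup>+" and xy: "(x, y) \<in> (arcs ori E')\<^sup>+" using assms(2-4) by auto
  obtain z where "(z, x) \<in> arcs ori E'" using yx by (cases rule: tranclE) auto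
  then obtain f where "f \<in> E'" "ori f = (z, x)" unfolding arcs_def by auto
  then show "\<exists>f\<in>E'. snd (ori f) = x" by (intro bexI[of _ f]) auto
  obtain z' where "(x, z') \<in> arcs ori E'" using xy by (cases rule: converse_tranclE) auto
  then obtain f' where "f' \<in> E'" "ori f' = (x, z')" unfolding arcs_def by auto
  then show "\<exists>f\<in>E'. fst (ori f) = x" by (intro bexI[of _ f']) auto
qed

lemma funpow_lt: "(\<And>x. x < n \<Longrightarrow> f x < (n::nat)) \<Longrightarrow> x < n \<Longrightarrow> (f ^^ k) x < n"
  by (induction k) auto

lemma coloring:
  fixes n :: nat and p al :: "nat \<Rightarrow> nat"
  assumes p: "\<And>i. i < n \<Longrightarrow> p i < n \<and> p i \<noteq> i \<and> p (p i) = i"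
    and al: "\<And>i. i < n \<Longrightarrow> al i < n \<and> al i \<noteq> i \<and> al (al i) = i"
  shows "\<exists>c::nat\<Rightarrow>bool. \<forall>i<n. c (p i) \<noteq> c i \<and> c (al i) \<noteq> c i"
proof -
  define pi where "pi x = al (p x)" for x
  define pi' where "pi' x = p (al x)" for x
  have pi_lt: "x < n \<Longrightarrow> pi x < n" for x using p al unfolding pi_def by blast
  have pi'_lt: "x < n \<Longrightarrow> pi' x < n" for x using p al unfolding pi'_def by blast
  have pipi': "x < n \<Longrightarrow> pi (pi' x) = x" for x using p al unfolding pi_def pi'_def by metis
  have pi'pi: "x < n \<Longrightarrow> pi' (pi x) = x" for x using p al unfolding pi_def pi'_def by metis
  define P where "P z x = (if 0 \<le> z then (pi ^^ nat z) x else (pi' ^^ nat (-z)) x)" for z :: int and x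
  have P_lt: "x < n \<Longrightarrow> P z x < n" for z x
    unfolding P_def using funpow_lt[of n pi] funpow_lt[of n pi'] pi_lt pi'_lt by auto
  have P0: "P 0 x = x" for x unfolding P_def by simp
  have P_succ: "P (z + 1) x = pi (P z x)" if x: "x < n" for z x
  proof (cases "0 \<le> z")
    case True
    then have "nat (z + 1) = Suc (nat z)" by simp
    then show ?thesis using True unfolding P_def by simp
  next
    case False
    then obtain m where m: "nat (-z) = Suc m" by (cases "nat (-z)") auto
    then have "nat (-(z+1)) = m" by simp
    moreover have "(pi' ^^ m) x < n" using funpow_lt[of n pi'] pi'_lt x by blast
    ultimately show ?thesis using False m unfolding P_def
      by (cases "0 \<le> z + 1") (auto simp: pipi')
  qed
  have P_pred: "P (z - 1) x = pi' (P z x)" if x: "x < n" for z x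
  proof (cases "0 < z")
    case True
    then obtain m where m: "nat z = Suc m" by (cases "nat z") auto
    then have "nat (z - 1) = m" by simp
    moreover have "(pi ^^ m) x < n" using funpow_lt[of n pi] pi_lt x by blast
    ultimately show ?thesis using True m unfolding P_def
      by (auto simp: pi'pi)
  next
    case False
    then have "nat (-(z - 1)) = Suc (nat (-z))" by simp
    then show ?thesis using False unfolding P_def by auto
  qed
  have P_add: "P a (P b x) = P (a + b) x" if x: "x < n" for a b x
  proof (induction a rule: int_induct[where k=0])
    case base then show ?case by (simp add: P0)
  next
    case (step1 i)
    have "P (i + 1) (P b x) = pi (P i (P b x))" using P_succ P_lt x by blast
    also have "\<dots> = pi (P (i + b) x)" using step1 by simp
    also have "\<dots> = P (i + b + 1) x" using P_succ x by simp
    finally show ?case by (simp add: ac_simps)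
  next
    case (step2 i)
    have "P (i - 1) (P b x) = pi' (P i (P b x))" using P_pred P_lt x by blast
    also have "\<dots> = pi' (P (i + b) x)" using step2 by simp
    also have "\<dots> = P (i + b - 1) x" using P_pred x by simp
    finally show ?case by (simp add: algebra_simps)
  qed
  have p_P: "p (P z x) = P (-z) (p x)" if x: "x < n" for z x
  proof (induction z rule: int_induct[where k=0])
    case base then show ?case by (simp add: P0)
  next
    case (step1 i)
    have y: "P i x < n" using P_lt x by blast
    have "p (P (i + 1) x) = p (pi (P i x))" using P_succ x by simp
    also have "\<dots> = pi' (p (P i x))" unfolding pi_def pi'_def using p y by simp
    also have "\<dots> = pi' (P (-i) (p x))" using step1 by simp
    also have "\<dots> = P (-i - 1) (p x)" using P_pred p x by simp
    finally show ?case by simp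
  next
    case (step2 i)
    have y: "P i x < n" using P_lt x by blast
    have "p (P (i - 1) x) = p (pi' (P i x))" using P_pred x by simp
    also have "\<dots> = al (P i x)" unfolding pi'_def using p al y by simp
    also have "\<dots> = pi (p (P i x))" unfolding pi_def using p y by simp
    also have "\<dots> = pi (P (-i) (p x))" using step2 by simp
    also have "\<dots> = P (-i + 1) (p x)" using P_succ[of "p x" "-i"] p[OF x] by simp
    also have "-i + 1 = - (i - 1)" by simp
    finally show ?case .
  qed
  define Rs where "Rs = {(x, pi x) | x. x < n}"
  define R where "R = Rs \<union> Rs\<inverse>"
  have R_P: "(x, y) \<in> R\<^sup>* \<Longrightarrow> x < n \<Longrightarrow> \<exists>z. y = P z x" for x y
  proof (induction rule: rtrancl_induct)
    case base then show ?case using P0 by metis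
  next
    case (step y y')
    then obtain z where z: "y = P z x" by blast
    from step(2) consider "y < n" "y' = pi y" | "y' < n" "y = pi y'" unfolding R_def Rs_def by blast
    then show ?case
    proof cases
      case 1 then show ?thesis using z P_succ step(4) by metis
    next
      case 2 then have "y' = pi' y" using pi'pi by simp
      then show ?thesis using z P_pred step(4) by metis
    qed
  qed
  have R_lt: "(x, y) \<in> R\<^sup>* \<Longrightarrow> x < n \<Longrightarrow> y < n" for x y using R_P P_lt by blast
  have symR: "sym (R\<^sup>*)" unfolding R_def by (intro sym_rtrancl) (simp add: sym_Un_converse)
  have R_sym: "(x, y) \<in> R\<^sup>* \<Longrightarrow> (y, x) \<in> R\<^sup>*" for x y using symR by (meson symD)
  have noself: "(x, p x) \<notin> R\<^sup>*" if x: "x < n" for x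
  proof
    assume "(x, p x) \<in> R\<^sup>*"
    then obtain m where m: "p x = P m x" using R_P x by blast
    show False
    proof (cases "even m")
      case True
      then obtain r where r: "m = 2 * r" by (auto elim: evenE)
      define y where "y = P r x"
      have yn: "y < n" using P_lt x unfolding y_def by blast
      have "p y = P (-r) (p x)" using p_P x unfolding y_def by blast
      also have "\<dots> = P (-r) (P (2 * r) x)" using m r by simp
      also have "\<dots> = P r x" using P_add x by simp
      finally have "p y = y" unfolding y_def by simp
      then show False using p yn by blast
    next
      case False
      then obtain r where r: "m = 2 * r + 1" by (auto elim: oddE)
      define y where "y = P r x"
      have yn: "y < n" using P_lt x unfolding y_def by blast
      have "p y = P (-r) (p x)" using p_P x unfolding y_def by blast
      also have "\<dots> = P (-r) (P (2 * r + 1) x)" using m r by simp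
      also have "\<dots> = P (r + 1) x" using P_add x by simp
      also have "\<dots> = pi y" unfolding y_def using P_succ x by simp
      finally have "al (p y) = p y" unfolding pi_def by simp
      then show False using p al yn by metis
    qed
  qed
  define Orb where "Orb x = {y. (x, y) \<in> R\<^sup>*}" for x
  have O_eq: "(x, y) \<in> R\<^sup>* \<Longrightarrow> Orb y = Orb x" for x y
  proof -
    assume xy: "(x, y) \<in> R\<^sup>*"
    have "z \<in> Orb y \<longleftrightarrow> z \<in> Orb x" for z
    proof
      assume "z \<in> Orb y" then show "z \<in> Orb x" unfolding Orb_def using rtrancl_trans[OF xy] by simp
    next
      assume "z \<in> Orb x" then show "z \<in> Orb y" unfolding Orb_def using rtrancl_trans[OF R_sym[OF xy]] by simp
    qed
    then show ?thesis by blast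
  qed
  have O_fin: "x < n \<Longrightarrow> finite (Orb x)" for x
  proof -
    assume "x < n"
    then have "Orb x \<subseteq> {..<n}" unfolding Orb_def using R_lt by blast
    then show ?thesis by (rule finite_subset) simp
  qed
  have O_in: "x \<in> Orb x" for x unfolding Orb_def by simp
  define c where "c x = (Min (Orb x) < Min (Orb (p x)))" for x
  have step_pi: "x < n \<Longrightarrow> (x, pi x) \<in> R\<^sup>*" for x
  proof -
    assume "x < n"
    then have "(x, pi x) \<in> R" unfolding R_def Rs_def by blast
    then show ?thesis by (rule r_into_rtrancl)
  qed
  have step_pi': "x < n \<Longrightarrow> (x, pi' x) \<in> R\<^sup>*" for x
  proof -
    assume x: "x < n"
    have "(pi' x, pi (pi' x)) \<in> Rs" unfolding Rs_def using pi'_lt x by blast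
    then have "(pi' x, x) \<in> Rs" using pipi' x by simp
    then have "(x, pi' x) \<in> R" unfolding R_def by simp
    then show ?thesis by (rule r_into_rtrancl)
  qed
  have neq: "Min (Orb i) \<noteq> Min (Orb (p i))" if i: "i < n" for i
  proof
    assume eq: "Min (Orb i) = Min (Orb (p i))"
    have "Min (Orb i) \<in> Orb i" using O_fin[OF i] O_in[of i] by (intro Min_in) auto
    moreover have "Min (Orb (p i)) \<in> Orb (p i)" using O_fin[of "p i"] O_in[of "p i"] p[OF i] by (intro Min_in) auto
    ultimately have "Min (Orb i) \<in> Orb i" "Min (Orb i) \<in> Orb (p i)" using eq by auto
    then have h: "(i, Min (Orb i)) \<in> R\<^sup>*" "(p i, Min (Orb i)) \<in> R\<^sup>*" by (simp_all add: Orb_def)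
    have "(i, p i) \<in> R\<^sup>*" by (rule rtrancl_trans[OF h(1) R_sym[OF h(2)]])
    then show False using noself i by blast
  qed
  have "\<forall>i<n. c (p i) \<noteq> c i \<and> c (al i) \<noteq> c i"
  proof (intro allI impI conjI)
    fix i assume i: "i < n"
    have "c (p i) = (Min (Orb (p i)) < Min (Orb i))" unfolding c_def using p i by simp
    then show "c (p i) \<noteq> c i" unfolding c_def using neq[OF i] by auto
    have "al i = pi (p i)" unfolding pi_def using p i by simp
    then have "(p i, al i) \<in> R\<^sup>*" using step_pi p i by simp
    then have o1: "Orb (al i) = Orb (p i)" using O_eq by blast
    have "p (al i) = pi' i" unfolding pi'_def by simp
    then have "(i, p (al i)) \<in> R\<^sup>*" using step_pi' i by simp
    then have o2: "Orb (p (al i)) = Orb i" using O_eq by blast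
    show "c (al i) \<noteq> c i" unfolding c_def o1 o2 using neq[OF i] by auto
  qed
  then show ?thesis by blast
qed

lemma even_inv:
  assumes "finite S" "\<And>x. x \<in> S \<Longrightarrow> f x \<in> S \<and> f x \<noteq> x \<and> f (f x) = x"
  shows "even (card S)"
  using assms
proof (induction "card S" arbitrary: S rule: less_induct)
  case less
  show ?case
  proof (cases "S = {}")
    case True then show ?thesis by simp
  next
    case False
    then obtain x where x: "x \<in> S" by blast
    define S' where "S' = S - {x, f x}"
    have fx: "f x \<in> S" "f x \<noteq> x" using less.prems(2) x by auto
    have cS: "card S = card S' + 2"
    proof -
      have "{x, f x} \<subseteq> S" using x fx by simp
      then have "card S' = card S - card {x, f x}" unfolding S'_def using less.prems(1)
        by (simp add: card_Diff_subset finite_subset)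
      moreover have "card {x, f x} = 2" using fx(2) by simp
      moreover have "card {x, f x} \<le> card S" using \<open>{x, f x} \<subseteq> S\<close> less.prems(1) by (rule card_mono[rotated])
      ultimately show ?thesis by linarith
    qed
    have "even (card S')"
    proof (rule less.hyps)
      show "card S' < card S" using cS by simp
      show "finite S'" unfolding S'_def using less.prems(1) by simp
      fix y assume y: "y \<in> S'"
      then have yS: "y \<in> S" "y \<noteq> x" "y \<noteq> f x" unfolding S'_def by auto
      have "f y \<noteq> x" using yS less.prems(2) by metis
      moreover have "f y \<noteq> f x" using yS less.prems(2) x by metis
      ultimately show "f y \<in> S' \<and> f y \<noteq> y \<and> f (f y) = y" using yS less.prems(2) unfolding S'_def by auto
    qed
    then show ?thesis using cS by simp
  qed
qed

locale ham =
  fixes V :: "'a set" and E :: "'a set set" and vs :: "'a list"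
  assumes sg: "simple_graph V E" and kec: "k_edge_connected 3 V E"
    and cub: "cubic V E" and hc: "hamiltonian_cycle V E vs"
begin

abbreviation "n \<equiv> length vs"

definition nx :: "nat \<Rightarrow> nat" where "nx i = Suc i mod n"
definition pv :: "nat \<Rightarrow> nat" where "pv i = (i + n - 1) mod n"
definition cyc :: "nat \<Rightarrow> 'a set" where "cyc i = {vs ! i, vs ! nx i}"
definition pp :: "nat \<Rightarrow> nat" where
  "pp i = (SOME j. j < n \<and> {vs ! i, vs ! j} \<in> E \<and> j \<noteq> nx i \<and> j \<noteq> pv i)"
definition ch :: "nat \<Rightarrow> 'a set" where "ch i = {vs ! i, vs ! pp i}"
definition al :: "nat \<Rightarrow> nat" where "al i = (if even i then Suc i else i - 1)"

lemma n3: "3 \<le> n" and dist: "distinct vs" and setV: "set vs = V"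
  using hc unfolding hamiltonian_cycle_def by auto

lemma n0: "0 < n" using n3 by linarith

lemma vsV: "i < n \<Longrightarrow> vs ! i \<in> V" using setV by auto

lemma vs_inj: "i < n \<Longrightarrow> j < n \<Longrightarrow> vs ! i = vs ! j \<longleftrightarrow> i = j"
  using dist by (simp add: nth_eq_iff_index_eq)

lemma V_vs: "x \<in> V \<Longrightarrow> \<exists>i<n. vs ! i = x"
  using setV by (auto simp: in_set_conv_nth)

lemma nx_alt: "i < n \<Longrightarrow> nx i = (if Suc i = n then 0 else Suc i)"
  unfolding nx_def by auto

lemma pv_alt: "i < n \<Longrightarrow> pv i = (if i = 0 then n - 1 else i - 1)"
proof -
  assume i: "i < n"
  show ?thesis
  proof (cases "i = 0")
    case True then show ?thesis unfolding pv_def using n0 by simp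
  next
    case False
    then have "i + n - 1 = (i - 1) + n" by simp
    then have "pv i = (i - 1) mod n" unfolding pv_def by simp
    then show ?thesis using False i by simp
  qed
qed

lemma nx_lt: "i < n \<Longrightarrow> nx i < n" using nx_alt by auto
lemma pv_lt: "i < n \<Longrightarrow> pv i < n" using pv_alt n0 by auto
lemma nx_pv: "i < n \<Longrightarrow> nx (pv i) = i" using pv_alt nx_alt pv_lt n0 by auto
lemma pv_nx: "i < n \<Longrightarrow> pv (nx i) = i" using pv_alt nx_alt nx_lt n0 by auto
lemma nx_neq: "i < n \<Longrightarrow> nx i \<noteq> i" using nx_alt n3 by auto
lemma pv_neq: "i < n \<Longrightarrow> pv i \<noteq> i" using pv_alt n3 by auto
lemma nx_neq_pv: "i < n \<Longrightarrow> nx i \<noteq> pv i" using nx_alt pv_alt n3 by auto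
lemma nxnx: "i < n \<Longrightarrow> nx (nx i) \<noteq> i" using nx_alt nx_lt n3 by auto

lemma cycE: "i < n \<Longrightarrow> cyc i \<in> E"
  using hc unfolding hamiltonian_cycle_def cyc_def nx_def by auto

lemma no_loop: "{x} \<notin> E"
proof
  assume "{x} \<in> E"
  then obtain u v where "{x} = {u, v}" "u \<noteq> v" using sg unfolding simple_graph_def by blast
  then have "u \<in> {x}" "v \<in> {x}" by auto
  then show False using \<open>u \<noteq> v\<close> by auto
qed


lemma cyc_pv: "i < n \<Longrightarrow> cyc (pv i) = {vs ! pv i, vs ! i}"
  unfolding cyc_def using nx_pv by simp

lemma in_cyc: "i < n \<Longrightarrow> t < n \<Longrightarrow> vs ! t \<in> cyc i \<longleftrightarrow> t = i \<or> t = nx i"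
  unfolding cyc_def using vs_inj nx_lt by auto

lemma cyc_inj: "i < n \<Longrightarrow> j < n \<Longrightarrow> cyc i = cyc j \<Longrightarrow> i = j"
proof -
  assume i: "i < n" and j: "j < n" and eq: "cyc i = cyc j"
  have "vs ! i \<in> cyc i" by (simp add: cyc_def)
  then have "vs ! i \<in> cyc j" using eq by simp
  then have 1: "i = j \<or> i = nx j" using in_cyc i j by blast
  have "vs ! j \<in> cyc j" by (simp add: cyc_def)
  then have "vs ! j \<in> cyc i" using eq by simp
  then have 2: "j = i \<or> j = nx i" using in_cyc i j by blast
  show "i = j" using 1 2 nxnx[OF j] by auto
qed

lemma cyc_ne: "i < n \<Longrightarrow> vs ! i \<noteq> vs ! nx i"
  using vs_inj nx_lt nx_neq by metis

lemma third: "t < n \<Longrightarrow> \<exists>j<n. {vs ! t, vs ! j} \<in> E \<and> j \<noteq> nx t \<and> j \<noteq> pv t"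
proof -
  assume t: "t < n"
  let ?Et = "{e\<in>E. vs ! t \<in> e}"
  have fE: "finite E" using sg_finite[OF sg] .
  have c3: "card ?Et = 3" using cub vsV[OF t] unfolding cubic_def by blast
  have in1: "cyc t \<in> ?Et" using cycE t unfolding cyc_def by simp
  have "cyc (pv t) \<in> E" using cycE pv_lt t by blast
  then have in2: "cyc (pv t) \<in> ?Et" using cyc_pv t by simp
  have ne: "cyc t \<noteq> cyc (pv t)" using cyc_inj pv_lt pv_neq t by metis
  have "\<not> ?Et \<subseteq> {cyc t, cyc (pv t)}"
  proof
    assume "?Et \<subseteq> {cyc t, cyc (pv t)}"
    then have "card ?Et \<le> card {cyc t, cyc (pv t)}" by (intro card_mono) auto
    also have "\<dots> \<le> 2" by (simp add: card_insert_le_m1)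
    finally show False using c3 by simp
  qed
  then obtain f where f: "f \<in> E" "vs ! t \<in> f" "f \<noteq> cyc t" "f \<noteq> cyc (pv t)" by blast
  obtain u w where uw: "f = {u, w}" "u \<noteq> w" "u \<in> V" "w \<in> V"
    using sg f(1) unfolding simple_graph_def by blast
  define y where "y = (if u = vs ! t then w else u)"
  have fy: "f = {vs ! t, y}" unfolding y_def using uw f(2) by auto
  have "y \<in> V" unfolding y_def using uw by auto
  then obtain j where j: "j < n" "vs ! j = y" using V_vs by blast
  have "j \<noteq> nx t" using f(3) fy j unfolding cyc_def by auto
  moreover have "j \<noteq> pv t" using f(4) fy j cyc_pv t by (auto simp: insert_commute)
  ultimately show ?thesis using j f(1) fy by auto
qed

lemma pp_props: "t < n \<Longrightarrow> pp t < n \<and> ch t \<in> E \<and> pp t \<noteq> nx t \<and> pp t \<noteq> pv t \<and> pp t \<noteq> t"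
proof -
  assume t: "t < n"
  have "pp t < n \<and> {vs ! t, vs ! pp t} \<in> E \<and> pp t \<noteq> nx t \<and> pp t \<noteq> pv t"
    unfolding pp_def using someI_ex[OF third[OF t]] by blast
  moreover have "pp t \<noteq> t"
  proof
    assume "pp t = t"
    then have "{vs ! t} \<in> E" using calculation by simp
    then show False using no_loop by blast
  qed
  ultimately show ?thesis unfolding ch_def by blast
qed

lemma ch_not_cyc: "t < n \<Longrightarrow> i < n \<Longrightarrow> ch t \<noteq> cyc i"
proof
  assume t: "t < n" and i: "i < n" and eq: "ch t = cyc i"
  have pt: "pp t < n" "pp t \<noteq> nx t" "pp t \<noteq> pv t" "pp t \<noteq> t" using pp_props t by auto
  have "vs ! t \<in> ch t" by (simp add: ch_def)
  then have "vs ! t \<in> cyc i" using eq by simp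
  then have 1: "t = i \<or> t = nx i" using in_cyc i t by blast
  have "vs ! pp t \<in> ch t" by (simp add: ch_def)
  then have "vs ! pp t \<in> cyc i" using eq by simp
  then have 2: "pp t = i \<or> pp t = nx i" using in_cyc i pt(1) by blast
  show False using 1 2 pt pv_nx i by auto
qed

lemma vs_ne_pv: "t < n \<Longrightarrow> vs ! pv t \<noteq> vs ! t"
  using vs_inj pv_lt pv_neq by metis

lemma vs_ne_pp: "t < n \<Longrightarrow> vs ! pp t \<noteq> vs ! t"
  using vs_inj pp_props by metis

lemma Et_eq: "t < n \<Longrightarrow> {e\<in>E. vs ! t \<in> e} = {cyc t, cyc (pv t), ch t}"
proof -
  assume t: "t < n"
  let ?Et = "{e\<in>E. vs ! t \<in> e}"
  have fE: "finite E" using sg_finite[OF sg] .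
  have c3: "card ?Et = 3" using cub vsV[OF t] unfolding cubic_def by blast
  have "cyc (pv t) \<in> E" using cycE pv_lt t by blast
  then have in2: "cyc (pv t) \<in> ?Et" using cyc_pv t by simp
  have in1: "cyc t \<in> ?Et" using cycE t unfolding cyc_def by simp
  have in3: "ch t \<in> ?Et" using pp_props t unfolding ch_def by simp
  have sub: "{cyc t, cyc (pv t), ch t} \<subseteq> ?Et" using in1 in2 in3 by blast
  have ne: "cyc t \<noteq> cyc (pv t)" using cyc_inj pv_lt pv_neq t by metis
  have "card {cyc t, cyc (pv t), ch t} = 3"
    using ne ch_not_cyc[OF t t] ch_not_cyc[OF t pv_lt[OF t]] by auto
  then show ?thesis using card_subset_eq[OF _ sub] fE c3 by auto
qed

lemma pp_pp: "t < n \<Longrightarrow> pp (pp t) = t"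
proof -
  assume t: "t < n"
  define s where "s = pp t"
  have s: "s < n" "s \<noteq> nx t" "s \<noteq> pv t" "s \<noteq> t" "ch t \<in> E" using pp_props t unfolding s_def by auto
  have "ch t \<in> {e\<in>E. vs ! s \<in> e}" using s unfolding ch_def s_def by simp
  then have "ch t \<in> {cyc s, cyc (pv s), ch s}" using Et_eq[OF s(1)] by simp
  moreover have "ch t \<noteq> cyc s" "ch t \<noteq> cyc (pv s)" using ch_not_cyc t s pv_lt by auto
  ultimately have "ch t = ch s" by simp
  moreover have "vs ! t \<in> ch t" by (simp add: ch_def)
  ultimately have "vs ! t \<in> ch s" by simp
  then have "vs ! t = vs ! s \<or> vs ! t = vs ! pp s" unfolding ch_def by simp
  then have "t = s \<or> t = pp s" using vs_inj t s pp_props by metis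
  then show ?thesis using s unfolding s_def by auto
qed

lemma E_cases: "e \<in> E \<Longrightarrow> (\<exists>i<n. e = cyc i) \<or> (\<exists>t<n. e = ch t)"
proof -
  assume e: "e \<in> E"
  obtain u w where uw: "e = {u, w}" "u \<in> V" using sg e unfolding simple_graph_def by blast
  obtain t where t: "t < n" "vs ! t = u" using V_vs uw by blast
  have "e \<in> {e\<in>E. vs ! t \<in> e}" using e uw t by simp
  then have "e \<in> {cyc t, cyc (pv t), ch t}" using Et_eq[OF t(1)] by simp
  then show ?thesis using t pv_lt by auto
qed

lemma n_even: "even n"
proof -
  have "even (card {0..<n})"
    by (rule even_inv[where f=pp]) (use pp_props pp_pp in auto)
  then show ?thesis by simp
qed

lemma al_props: "i < n \<Longrightarrow> al i < n \<and> al i \<noteq> i \<and> al (al i) = i"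
proof -
  assume i: "i < n"
  show ?thesis
  proof (cases "even i")
    case True
    have "Suc i \<noteq> n"
    proof
      assume "Suc i = n" then have "even (Suc i)" using n_even by simp
      then show False using True by simp
    qed
    then show ?thesis using True i unfolding al_def by simp
  next
    case False
    then have "i \<noteq> 0" by (metis even_zero)
    have "even (i - 1)" using False \<open>i \<noteq> 0\<close> by simp
    moreover have "i - 1 < n" "i - 1 \<noteq> i" "Suc (i - 1) = i" using i \<open>i \<noteq> 0\<close> by auto
    ultimately show ?thesis using False unfolding al_def by simp
  qed
qed

lemma al_even: "even i \<Longrightarrow> i < n \<Longrightarrow> al i = nx i"
proof -
  assume i: "even i" "i < n"
  have "Suc i \<noteq> n"
  proof
    assume "Suc i = n" then have "even (Suc i)" using n_even by simp
    then show False using i by simp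
  qed
  then show ?thesis using nx_alt i unfolding al_def by simp
qed

lemma al_odd: "odd i \<Longrightarrow> i < n \<Longrightarrow> al i = pv i"
  using pv_alt unfolding al_def by (auto elim: oddE)

lemma pv_even: "even t \<Longrightarrow> t < n \<Longrightarrow> odd (pv t)"
  using pv_alt n_even n0 by (auto elim: evenE)

lemma pv_odd: "odd t \<Longrightarrow> t < n \<Longrightarrow> even (pv t)"
  using pv_alt by (auto elim: oddE)

end

context ham begin

lemma vsum:
  assumes gin: "\<And>e. e \<in> E \<Longrightarrow> g (ori e) \<in> e" and t: "t < n"
  shows "(\<Sum>e\<in>{e\<in>E. g (ori e) = vs ! t}. w e) =
    (if g (ori (cyc t)) = vs ! t then w (cyc t) else 0) +
    (if g (ori (cyc (pv t))) = vs ! t then w (cyc (pv t)) else 0) +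
    (if g (ori (ch t)) = vs ! t then w (ch t) else (0::nat))"
proof -
  have "{e\<in>E. g (ori e) = vs ! t} = {e \<in> {e\<in>E. vs ! t \<in> e}. g (ori e) = vs ! t}"
  proof (rule set_eqI)
    fix x show "x \<in> {e\<in>E. g (ori e) = vs ! t} \<longleftrightarrow> x \<in> {e \<in> {e\<in>E. vs ! t \<in> e}. g (ori e) = vs ! t}"
      using gin[of x] by auto
  qed
  also have "\<dots> = {e \<in> {cyc t, cyc (pv t), ch t}. g (ori e) = vs ! t}" using Et_eq[OF t] by simp
  finally have eq: "{e\<in>E. g (ori e) = vs ! t} = {e \<in> {cyc t, cyc (pv t), ch t}. g (ori e) = vs ! t}" .
  have ne: "cyc t \<noteq> cyc (pv t)" "cyc t \<noteq> ch t" "cyc (pv t) \<noteq> ch t"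
    using cyc_inj pv_lt pv_neq t ch_not_cyc by metis+
  have fin: "finite {cyc t, cyc (pv t), ch t}" by simp
  show ?thesis unfolding eq sum.inter_filter[OF fin] using ne by simp
qed

end

locale ham2 = ham +
  fixes c :: "nat \<Rightarrow> bool"
  assumes cpp: "i < n \<Longrightarrow> c (pp i) \<noteq> c i" and cal: "i < n \<Longrightarrow> c (al i) \<noteq> c i"
begin

definition iscyc :: "'a set \<Rightarrow> bool" where "iscyc e = (\<exists>i<n. e = cyc i)"
definition ci :: "'a set \<Rightarrow> nat" where "ci e = (SOME i. i < n \<and> e = cyc i)"
definition cf :: "'a set \<Rightarrow> nat" where "cf e = (SOME t. t < n \<and> e = ch t \<and> \<not> c t)"

definition o1 :: "'a set \<Rightarrow> 'a \<times> 'a" where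
  "o1 e = (if iscyc e then (if odd (ci e) \<or> c (ci e) then (vs ! ci e, vs ! nx (ci e))
      else (vs ! nx (ci e), vs ! ci e)) else (vs ! cf e, vs ! pp (cf e)))"
definition w1 :: "'a set \<Rightarrow> nat" where
  "w1 e = (if iscyc e then (if odd (ci e) then 1 else if c (ci e) then 3 else 1) else 2)"
definition o2 :: "'a set \<Rightarrow> 'a \<times> 'a" where
  "o2 e = (if iscyc e then (vs ! ci e, vs ! nx (ci e)) else (vs ! pp (cf e), vs ! cf e))"
definition w2 :: "'a set \<Rightarrow> nat" where
  "w2 e = (if iscyc e then (if odd (ci e) then 2 else if c (ci e) then 1 else 3) else 1)"

lemma iscyc_cyc: "i < n \<Longrightarrow> iscyc (cyc i)" unfolding iscyc_def by blast

lemma ci_cyc: "i < n \<Longrightarrow> ci (cyc i) = i"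
  unfolding ci_def by (rule some_equality) (use cyc_inj in auto)

lemma not_iscyc_ch: "t < n \<Longrightarrow> \<not> iscyc (ch t)"
  unfolding iscyc_def using ch_not_cyc by blast

lemma ch_eq: "t < n \<Longrightarrow> t' < n \<Longrightarrow> ch t = ch t' \<Longrightarrow> t' = t \<or> t' = pp t"
proof -
  assume t: "t < n" and t': "t' < n" and eq: "ch t = ch t'"
  have "vs ! t' \<in> ch t'" by (simp add: ch_def)
  then have "vs ! t' \<in> ch t" using eq by simp
  then have "vs ! t' = vs ! t \<or> vs ! t' = vs ! pp t" unfolding ch_def by simp
  then show ?thesis using vs_inj t t' pp_props by metis
qed

lemma cf_ch: "t < n \<Longrightarrow> cf (ch t) = (if c t then pp t else t)"
proof -
  assume t: "t < n"
  have pt: "pp t < n" "pp (pp t) = t" using pp_props pp_pp t by auto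
  have chs: "ch (pp t) = ch t" unfolding ch_def using pt by (simp add: insert_commute)
  show ?thesis
  proof (cases "c t")
    case True
    have "cf (ch t) = pp t" unfolding cf_def
    proof (rule some_equality)
      show "pp t < n \<and> ch t = ch (pp t) \<and> \<not> c (pp t)" using pt chs True cpp[OF t] by auto
      fix t' assume h: "t' < n \<and> ch t = ch t' \<and> \<not> c t'"
      then show "t' = pp t" using ch_eq[OF t] True by blast
    qed
    then show ?thesis using True by simp
  next
    case False
    have "cf (ch t) = t" unfolding cf_def
    proof (rule some_equality)
      show "t < n \<and> ch t = ch t \<and> \<not> c t" using t False by auto
      fix t' assume h: "t' < n \<and> ch t = ch t' \<and> \<not> c t'"
      then have "t' = t \<or> t' = pp t" using ch_eq[OF t] by blast
      moreover have "c (pp t)" using cpp[OF t] False by auto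
      ultimately show "t' = t" using h by auto
    qed
    then show ?thesis using False by simp
  qed
qed

lemma o1_cyc: "i < n \<Longrightarrow> o1 (cyc i) = (if odd i \<or> c i then (vs ! i, vs ! nx i) else (vs ! nx i, vs ! i))"
  unfolding o1_def using iscyc_cyc ci_cyc by simp
lemma w1_cyc: "i < n \<Longrightarrow> w1 (cyc i) = (if odd i then 1 else if c i then 3 else 1)"
  unfolding w1_def using iscyc_cyc ci_cyc by simp
lemma o2_cyc: "i < n \<Longrightarrow> o2 (cyc i) = (vs ! i, vs ! nx i)"
  unfolding o2_def using iscyc_cyc ci_cyc by simp
lemma w2_cyc: "i < n \<Longrightarrow> w2 (cyc i) = (if odd i then 2 else if c i then 1 else 3)"
  unfolding w2_def using iscyc_cyc ci_cyc by simp
lemma o1_ch: "t < n \<Longrightarrow> o1 (ch t) = (if c t then (vs ! pp t, vs ! t) else (vs ! t, vs ! pp t))"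
  unfolding o1_def using not_iscyc_ch cf_ch pp_pp by simp
lemma w1_ch: "t < n \<Longrightarrow> w1 (ch t) = 2"
  unfolding w1_def using not_iscyc_ch by simp
lemma o2_ch: "t < n \<Longrightarrow> o2 (ch t) = (if c t then (vs ! t, vs ! pp t) else (vs ! pp t, vs ! t))"
  unfolding o2_def using not_iscyc_ch cf_ch pp_pp by simp
lemma w2_ch: "t < n \<Longrightarrow> w2 (ch t) = 1"
  unfolding w2_def using not_iscyc_ch by simp

lemma o1_ori: "is_orientation E o1"
  unfolding is_orientation_def
proof
  fix e assume "e \<in> E"
  then consider i where "i < n" "e = cyc i" | t where "t < n" "e = ch t" using E_cases by blast
  then show "e = {fst (o1 e), snd (o1 e)}"
  proof cases
    case 1 then show ?thesis using o1_cyc unfolding cyc_def by (auto simp: insert_commute)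
  next
    case 2 then show ?thesis using o1_ch unfolding ch_def by (auto simp: insert_commute)
  qed
qed

lemma o2_ori: "is_orientation E o2"
  unfolding is_orientation_def
proof
  fix e assume "e \<in> E"
  then consider i where "i < n" "e = cyc i" | t where "t < n" "e = ch t" using E_cases by blast
  then show "e = {fst (o2 e), snd (o2 e)}"
  proof cases
    case 1 then show ?thesis using o2_cyc unfolding cyc_def by (auto simp: insert_commute)
  next
    case 2 then show ?thesis using o2_ch unfolding ch_def by (auto simp: insert_commute)
  qed
qed

lemma parity_facts:
  assumes t: "t < n"
  shows "even t \<Longrightarrow> odd (pv t)" "odd t \<Longrightarrow> even (pv t)" "odd t \<Longrightarrow> c (pv t) = (\<not> c t)"
  using pv_even pv_odd t apply auto[2]
  using cal[OF t] al_odd[OF _ t] by auto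

lemma cons1: "\<forall>v\<in>V. (\<Sum>e\<in>{e\<in>E. snd (o1 e) = v}. w1 e) = (\<Sum>e\<in>{e\<in>E. fst (o1 e) = v}. w1 e)"
proof
  fix v assume "v \<in> V"
  then obtain t where t: "t < n" "vs ! t = v" using V_vs by blast
  have gs: "\<And>e. e \<in> E \<Longrightarrow> snd (o1 e) \<in> e" and gf: "\<And>e. e \<in> E \<Longrightarrow> fst (o1 e) \<in> e"
    using ori_eq[OF o1_ori] by (metis insertI1 insertI2 singletonI)+
  have pt: "pv t < n" using pv_lt t by blast
  have ne: "vs ! nx t \<noteq> vs ! t" "vs ! pv t \<noteq> vs ! t" "vs ! pp t \<noteq> vs ! t"
    using cyc_ne[OF t(1)] vs_ne_pv[OF t(1)] vs_ne_pp[OF t(1)] by auto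
  note simps = vsum[where g=snd and ori=o1 and w=w1, OF gs t(1)] vsum[where g=fst and ori=o1 and w=w1, OF gf t(1)] o1_cyc[OF t(1)] o1_cyc[OF pt]
    w1_cyc[OF t(1)] w1_cyc[OF pt] o1_ch[OF t(1)] w1_ch[OF t(1)] nx_pv[OF t(1)] ne
  show "(\<Sum>e\<in>{e\<in>E. snd (o1 e) = v}. w1 e) = (\<Sum>e\<in>{e\<in>E. fst (o1 e) = v}. w1 e)"
    unfolding t(2)[symmetric]
    using parity_facts[OF t(1)] by (cases "even t"; cases "c t") (simp_all add: simps)
qed

lemma cons2: "\<forall>v\<in>V. (\<Sum>e\<in>{e\<in>E. snd (o2 e) = v}. w2 e) = (\<Sum>e\<in>{e\<in>E. fst (o2 e) = v}. w2 e)"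
proof
  fix v assume "v \<in> V"
  then obtain t where t: "t < n" "vs ! t = v" using V_vs by blast
  have gs: "\<And>e. e \<in> E \<Longrightarrow> snd (o2 e) \<in> e" and gf: "\<And>e. e \<in> E \<Longrightarrow> fst (o2 e) \<in> e"
    using ori_eq[OF o2_ori] by (metis insertI1 insertI2 singletonI)+
  have pt: "pv t < n" using pv_lt t by blast
  have ne: "vs ! nx t \<noteq> vs ! t" "vs ! pv t \<noteq> vs ! t" "vs ! pp t \<noteq> vs ! t"
    using cyc_ne[OF t(1)] vs_ne_pv[OF t(1)] vs_ne_pp[OF t(1)] by auto
  note simps = vsum[where g=snd and ori=o2 and w=w2, OF gs t(1)] vsum[where g=fst and ori=o2 and w=w2, OF gf t(1)] o2_cyc[OF t(1)] o2_cyc[OF pt]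
    w2_cyc[OF t(1)] w2_cyc[OF pt] o2_ch[OF t(1)] w2_ch[OF t(1)] nx_pv[OF t(1)] ne
  show "(\<Sum>e\<in>{e\<in>E. snd (o2 e) = v}. w2 e) = (\<Sum>e\<in>{e\<in>E. fst (o2 e) = v}. w2 e)"
    unfolding t(2)[symmetric]
    using parity_facts[OF t(1)] by (cases "even t"; cases "c t") (simp_all add: simps)
qed

end

context ham2 begin

lemma w1_pos: "e \<in> E \<Longrightarrow> 1 \<le> w1 e"
  unfolding w1_def by auto
lemma w2_pos: "e \<in> E \<Longrightarrow> 1 \<le> w2 e"
  unfolding w2_def by auto

lemma covered: "e \<in> E \<Longrightarrow> deletable V E o1 e \<or> deletable V E o2 e"
proof -
  assume e: "e \<in> E"
  have "w1 e = 1 \<or> w2 e = 1"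
  proof -
    consider i where "i < n" "e = cyc i" | t where "t < n" "e = ch t" using E_cases e by blast
    then show ?thesis
    proof cases
      case 1 then show ?thesis using w1_cyc w2_cyc by auto
    next
      case 2 then show ?thesis using w2_ch by auto
    qed
  qed
  then show ?thesis
    using flow_deletable[OF sg kec o1_ori _ cons1 e] flow_deletable[OF sg kec o2_ori _ cons2 e]
      w1_pos w2_pos by blast
qed

end

context ham begin

lemma not_one: "is_orientation E ori \<Longrightarrow> \<exists>e\<in>E. \<not> deletable V E ori e"
proof (rule ccontr)
  assume ori: "is_orientation E ori" and all: "\<not> (\<exists>e\<in>E. \<not> deletable V E ori e)"
  define x where "x = vs ! 0"
  define y where "y = vs ! 1"
  have n0': "0 < n" "1 < n" using n3 by auto
  have xV: "x \<in> V" "y \<in> V" unfolding x_def y_def using vsV n0' by auto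
  have xy: "x \<noteq> y" unfolding x_def y_def using vs_inj n0' by auto
  define d where "d f = (snd (ori f) = x)" for f
  have key: "d f \<longleftrightarrow> fst (ori f) \<noteq> x" if f: "f \<in> E" "x \<in> f" for f
  proof -
    have fe: "f = {fst (ori f), snd (ori f)}" using ori_eq[OF ori f(1)] .
    have "fst (ori f) \<noteq> snd (ori f)"
    proof
      assume "fst (ori f) = snd (ori f)"
      then have "f = {fst (ori f)}" using fe by (metis insert_absorb2)
      then show False using no_loop f(1) by metis
    qed
    moreover have "fst (ori f) = x \<or> snd (ori f) = x" using f(2) fe by (metis insert_iff singletonD)
    ultimately show ?thesis unfolding d_def by auto
  qed
  let ?a = "cyc 0" and ?b = "cyc (pv 0)" and ?c = "ch 0"
  have Ex: "{e\<in>E. x \<in> e} = {?a, ?b, ?c}" unfolding x_def using Et_eq[OF n0'(1)] .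
  obtain e r1 r2 where er: "{?a, ?b, ?c} = {e, r1, r2}" "d r1 = d r2"
  proof (cases "d ?a = d ?b")
    case True then show ?thesis using that[of ?c ?a ?b] by (simp add: insert_commute)
  next
    case False
    show ?thesis
    proof (cases "d ?a = d ?c")
      case True then show ?thesis using that[of ?b ?a ?c] by (simp add: insert_commute)
    next
      case False
      then have "d ?b = d ?c" using \<open>d ?a \<noteq> d ?b\<close> by blast
      then show ?thesis using that[of ?a ?b ?c] by simp
    qed
  qed
  have "e \<in> {?a, ?b, ?c}" unfolding er(1) by simp
  then have "e \<in> {e\<in>E. x \<in> e}" unfolding Ex .
  then have eE: "e \<in> E" by simp
  then have "deletable V E ori e" using all by blast
  then have st: "strong_orientation V (E - {e}) ori" unfolding deletable_def .
  obtain f where f: "f \<in> E - {e}" "snd (ori f) = x" using strong_in_out(1)[OF st xV(1) xV(2) xy] by blast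
  obtain f' where f': "f' \<in> E - {e}" "fst (ori f') = x" using strong_in_out(2)[OF st xV(1) xV(2) xy] by blast
  have xf: "x \<in> f" using ori_eq[OF ori, of f] f by (metis DiffD1 insertI2 singletonI)
  have xf': "x \<in> f'" using ori_eq[OF ori, of f'] f' by (metis DiffD1 insertI1)
  have "f \<in> {e\<in>E. x \<in> e}" using f xf by simp
  then have "f \<in> {e, r1, r2}" unfolding Ex er(1) .
  then have "f = r1 \<or> f = r2" using f by blast
  moreover have "d f" using f unfolding d_def by simp
  ultimately have d1: "d r1" "d r2" using er(2) by auto
  have "f' \<in> {e\<in>E. x \<in> e}" using f' xf' by simp
  then have "f' \<in> {e, r1, r2}" unfolding Ex er(1) .
  then have "f' = r1 \<or> f' = r2" using f' by blast
  moreover have "\<not> d f'" using key[of f'] f' xf' by auto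
  ultimately show False using d1 by auto
qed

end

theorem mainTheorem4:
  fixes V :: "'a set" and E :: "'a set set"
  assumes "simple_graph V E"
    and "k_edge_connected 3 V E"
    and "cubic V E"
    and "\<exists>vs. hamiltonian_cycle V E vs"
  shows "frank_number V E = 2"
proof -
  obtain vs where hc: "hamiltonian_cycle V E vs" using assms(4) by blast
  interpret ham V E vs using assms(1-3) hc by unfold_locales
  have "\<exists>c::nat\<Rightarrow>bool. \<forall>i<n. c (pp i) \<noteq> c i \<and> c (al i) \<noteq> c i"
  proof (rule coloring)
    fix i assume i: "i < n"
    show "pp i < n \<and> pp i \<noteq> i \<and> pp (pp i) = i" using pp_props[OF i] pp_pp[OF i] by simp
    show "al i < n \<and> al i \<noteq> i \<and> al (al i) = i" using al_props[OF i] .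
  qed
  then obtain c :: "nat \<Rightarrow> bool" where c: "\<forall>i<n. c (pp i) \<noteq> c i \<and> c (al i) \<noteq> c i"
    by blast
  interpret ham2 V E vs c using c by unfold_locales auto
  let ?P = "\<lambda>k. \<exists>os. length os = k \<and> (\<forall>ori\<in>set os. is_orientation E ori) \<and>
      (\<forall>e\<in>E. \<exists>ori\<in>set os. deletable V E ori e)"
  have P2: "?P 2"
    by (rule exI[of _ "[o1, o2]"]) (use o1_ori o2_ori covered in auto)
  have lb: "2 \<le> k" if Pk: "?P k" for k
  proof (rule ccontr)
    assume "\<not> 2 \<le> k"
    then have "k = 0 \<or> k = 1" by auto
    then show False
    proof
      assume "k = 0"
      moreover have "cyc 0 \<in> E" using cycE[OF n0] .
      ultimately show False using Pk by auto
    next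
      assume "k = 1"
      then obtain ori where "is_orientation E ori" "\<forall>e\<in>E. deletable V E ori e"
        using Pk by (auto simp: length_Suc_conv)
      then show False using not_one by blast
    qed
  qed
  show ?thesis unfolding frank_number_def
    by (rule Least_equality) (use P2 lb in auto)
qed

end
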